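(* Let $N$ be a positive integer, $a,b,c\in\mathbb{R}$ with $a\neq0$, $W=[w_{ij}]\in\mathbb{R}^{N\times N}$ with $w_{ii}=0$ for all $i$, $\Delta=\mathrm{diag}(\delta_1,\dots,\delta_N)$ with $\delta_i\in\{0,1\}$, and $h>0$. Put $\Phi_s=e^{ah}I_N+\frac{c}{a}(e^{ah}-1)W$ and $\Psi_s=\frac{b}{a}(e^{ah}-1)\Delta$. If the continuous-time system $\dot X(t)=(aI_N+cW)X(t)+b\Delta U(t)$ is controllable, then the discrete-time system $X(k+1)=\Phi_sX(k)+\Psi_sU(k)$ is controllable.
   Context: The discrete system is the periodic sampling (period $h$, zero-order hold) of the continuous one. The continuous-time system is controllable in the usual sense (equivalently $\mathrm{rank}[sI_N-(aI_N+cW),\ b\Delta]=N$ for all $s\in\mathbb{C}$). The discrete-time system is called controllable if every initial state can be steered to the origin in finitely many steps. *)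

theory Defs
  imports "HOL-Analysis.Analysis"
begin

definition diag_mat :: "real ^ 'n \<Rightarrow> real ^ 'n ^ 'n" where
  "diag_mat d = (\<chi> i j. if i = j then d $ i else 0)"

definition ct_controllable :: "real ^ 'n ^ 'n \<Rightarrow> real ^ 'm ^ 'n \<Rightarrow> bool" where
  "ct_controllable A B \<longleftrightarrow>
     (\<forall>x0. \<exists>T u x. T \<ge> 0 \<and> continuous_on {0..T} u \<and>
        x 0 = x0 \<and> x T = 0 \<and>
        (\<forall>t\<in>{0..T}. (x has_vector_derivative (A *v x t + B *v u t)) (at t within {0..T})))"

fun dt_state :: "real ^ 'n ^ 'n \<Rightarrow> real ^ 'm ^ 'n \<Rightarrow> real ^ 'n \<Rightarrow> (nat \<Rightarrow> real ^ 'm) \<Rightarrow> nat \<Rightarrow> real ^ 'n" where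
  "dt_state Phi Psi x0 u 0 = x0"
| "dt_state Phi Psi x0 u (Suc k) = Phi *v dt_state Phi Psi x0 u k + Psi *v u k"

definition dt_controllable :: "real ^ 'n ^ 'n \<Rightarrow> real ^ 'm ^ 'n \<Rightarrow> bool" where
  "dt_controllable Phi Psi \<longleftrightarrow> (\<forall>x0. \<exists>k u. dt_state Phi Psi x0 u k = 0)"

end

theory Submission
  imports Defs
begin


lemma lin_ode_zero:
  fixes z :: "real \<Rightarrow> 'a::euclidean_space" and L :: "'a \<Rightarrow> 'a"
  assumes L: "bounded_linear L" and T: "0 \<le> T"
    and d: "\<forall>t\<in>{0..T}. (z has_vector_derivative L (z t)) (at t within {0..T})"
    and zT: "z T = 0"
  shows "z 0 = 0"
proof -
  obtain C where C: "C > 0" "\<And>x. norm (L x) \<le> norm x * C"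
    using bounded_linear.pos_bounded[OF L] by blast
  define g where "g t = exp (2*C*t) * (z t \<bullet> z t)" for t
  have cz: "continuous_on {0..T} z"
    using d has_vector_derivative_continuous continuous_on_eq_continuous_within by blast
  have cg: "continuous_on {0..T} g"
    unfolding g_def by (intro continuous_intros cz)
  have "g 0 \<le> g T"
  proof (rule DERIV_nonneg_imp_increasing_open[OF T _ cg])
    fix t assume t: "0 < t" "t < T"
    have dz: "(z has_vector_derivative L (z t)) (at t)"
    proof -
      have "(z has_vector_derivative L (z t)) (at t within {0..T})" using d t by auto
      thus ?thesis using at_within_Icc_at[of 0 t T] t by simp
    qed
    have di: "((\<lambda>t. z t \<bullet> z t) has_vector_derivative (z t \<bullet> L (z t) + L (z t) \<bullet> z t)) (at t)"
      by (rule bounded_bilinear.has_vector_derivative[OF bounded_bilinear_inner dz dz])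
    hence di': "((\<lambda>t. z t \<bullet> z t) has_real_derivative (2 * (z t \<bullet> L (z t)))) (at t)"
      by (simp add: has_real_derivative_iff_has_vector_derivative inner_commute)
    have "(g has_real_derivative
        (exp (2*C*t) * (2*C) * (z t \<bullet> z t) + exp (2*C*t) * (2 * (z t \<bullet> L (z t))))) (at t)"
      unfolding g_def
      by (auto intro!: derivative_eq_intros di')
    moreover have "exp (2*C*t) * (2*C) * (z t \<bullet> z t) + exp (2*C*t) * (2 * (z t \<bullet> L (z t))) \<ge> 0"
    proof -
      have "\<bar>z t \<bullet> L (z t)\<bar> \<le> norm (z t) * norm (L (z t))" by (rule Cauchy_Schwarz_ineq2)
      also have "\<dots> \<le> norm (z t) * (norm (z t) * C)" using C(2) by (simp add: mult_left_mono)
      finally have "\<bar>z t \<bullet> L (z t)\<bar> \<le> C * (z t \<bullet> z t)"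
        by (simp add: power2_norm_eq_inner[symmetric] power2_eq_square algebra_simps)
      hence "0 \<le> C * (z t \<bullet> z t) + z t \<bullet> L (z t)" by linarith
      hence "0 \<le> exp (2*C*t) * (2 * (C * (z t \<bullet> z t) + z t \<bullet> L (z t)))" by simp
      thus ?thesis by (simp add: algebra_simps)
    qed
    ultimately show "\<exists>y. (g has_real_derivative y) (at t) \<and> 0 \<le> y" by blast
  qed
  hence "z 0 \<bullet> z 0 \<le> 0" using zT by (simp add: g_def)
  thus ?thesis by (metis inner_eq_zero_iff inner_ge_zero order_antisym)
qed

lemma ct_full:
  fixes A :: "real^'n^'n" and B :: "real^'m^'n" and S :: "(real^'n) set"
  assumes ct: "ct_controllable A B" and S: "subspace S"
    and AS: "\<forall>x\<in>S. A *v x \<in> S" and BS: "\<forall>u. B *v u \<in> S"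
  shows "S = UNIV"
proof (rule ccontr)
  assume "S \<noteq> UNIV"
  then have "span S \<subset> span UNIV" using span_eq_iff[of S] S by (metis UNIV_I psubsetI span_UNIV subsetI)
  then obtain w where w0: "w \<noteq> 0" and wS: "\<And>y. y \<in> span S \<Longrightarrow> orthogonal w y"
    using orthogonal_to_subspace_exists_gen by blast
  define T where "T = {y. \<forall>x\<in>S. orthogonal x y}"
  have sT: "subspace T" unfolding T_def by (rule subspace_orthogonal_to_vectors)
  obtain Bv where BvT: "Bv \<subseteq> T" and po: "pairwise orthogonal Bv"
    and n1: "\<And>x. x \<in> Bv \<Longrightarrow> norm x = 1" and ind: "independent Bv" and spB: "span Bv = T"
    using orthonormal_basis_subspace[OF sT] by metis
  have fin: "finite Bv" using ind independent_imp_finite by blast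
  define Q where "Q x = (\<Sum>v\<in>Bv. (v \<bullet> x) *\<^sub>R v)" for x :: "real^'n"
  have linQ: "linear Q"
    unfolding Q_def linear_iff
    by (auto simp: inner_add_right sum.distrib scaleR_add_left scaleR_sum_right)
  have Qv: "v' \<bullet> Q y = v' \<bullet> y" if v': "v' \<in> Bv" for v' y
  proof -
    have "\<And>v. v \<in> Bv \<Longrightarrow> v' \<bullet> ((v \<bullet> y) *\<^sub>R v) = (if v = v' then v' \<bullet> y else 0)"
    proof -
      fix v assume v: "v \<in> Bv"
      show "v' \<bullet> ((v \<bullet> y) *\<^sub>R v) = (if v = v' then v' \<bullet> y else 0)"
      proof (cases "v = v'")
        case True
        then show ?thesis using n1[OF v'] by (simp add: norm_eq_1)
      next
        case False
        then have "orthogonal v' v" using po v v' by (auto simp: pairwise_def)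
        then show ?thesis using False by (simp add: orthogonal_def)
      qed
    qed
    then have "v' \<bullet> Q y = (\<Sum>v\<in>Bv. if v = v' then v' \<bullet> y else 0)"
      unfolding Q_def inner_sum_right by (rule sum.cong[OF refl])
    also have "\<dots> = v' \<bullet> y" using fin v' by (simp add: sum.delta')
    finally show ?thesis .
  qed
  have perp: "orthogonal y t" if "\<And>v. v \<in> Bv \<Longrightarrow> v \<bullet> y = 0" "t \<in> T" for y t
  proof -
    have "orthogonal y t"
      by (rule orthogonal_to_span[of t Bv y]) (use that spB in \<open>auto simp: orthogonal_def inner_commute\<close>)
    then show ?thesis .
  qed
  have key: "Q (A *v x) = Q (A *v (Q x))" for x
  proof -
    define y where "y = x - Q x"
    have yT: "orthogonal y t" if "t \<in> T" for t
      using perp[OF _ that, of y] Qv by (simp add: y_def inner_diff_right)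
    have "v \<bullet> (A *v y) = 0" if v: "v \<in> Bv" for v
    proof -
      have "(v v* A) \<in> T"
      proof -
        have "orthogonal s (v v* A)" if "s \<in> S" for s
        proof -
          have "v \<in> T" using v BvT by auto
          then have "orthogonal s v" using \<open>s \<in> S\<close> unfolding T_def by auto
          moreover have "A *v s \<in> S" using AS that by auto
          ultimately have "orthogonal (A *v s) v" using \<open>v \<in> T\<close> unfolding T_def by auto
          then show ?thesis by (metis orthogonal_def dot_lmul_matrix inner_commute)
        qed
        then show ?thesis unfolding T_def by auto
      qed
      then have "orthogonal y (v v* A)" using yT by auto
      then show ?thesis by (simp add: orthogonal_def dot_lmul_matrix[symmetric] inner_commute)
    qed
    then have "Q (A *v y) = 0" unfolding Q_def by simp
    then show ?thesis
      using linear_diff[OF linQ] by (simp add: y_def matrix_vector_mult_diff_distrib)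
  qed
  from ct obtain Tt u x where Tt: "Tt \<ge> 0" and x0: "x 0 = w" and xT: "x Tt = 0"
    and dx: "\<forall>t\<in>{0..Tt}. (x has_vector_derivative (A *v x t + B *v u t)) (at t within {0..Tt})"
    unfolding ct_controllable_def by blast
  define L where "L y = Q (A *v y)" for y
  have bQ: "bounded_linear Q" using linQ linear_conv_bounded_linear by blast
  have bL: "bounded_linear L"
    unfolding L_def using linear_compose[OF matrix_vector_mul_linear linQ, of A]
    by (simp add: o_def linear_conv_bounded_linear)
  have QB: "Q (B *v v) = 0" for v
  proof -
    have "\<And>b. b \<in> Bv \<Longrightarrow> b \<bullet> (B *v v) = 0"
      using BS BvT unfolding T_def by (auto simp: orthogonal_def inner_commute)
    then show ?thesis unfolding Q_def by simp
  qed
  have "(\<lambda>t. Q (x t)) 0 = 0"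
  proof (rule lin_ode_zero[OF bL Tt])
    show "Q (x Tt) = 0" using xT linear_0[OF linQ] by simp
    show "\<forall>t\<in>{0..Tt}. ((\<lambda>t. Q (x t)) has_vector_derivative L (Q (x t))) (at t within {0..Tt})"
    proof
      fix t assume "t \<in> {0..Tt}"
      then have "((\<lambda>t. Q (x t)) has_vector_derivative Q (A *v x t + B *v u t)) (at t within {0..Tt})"
        using bounded_linear.has_vector_derivative[OF bQ] dx by blast
      moreover have "Q (A *v x t + B *v u t) = L (Q (x t))"
        using linear_add[OF linQ] QB key by (simp add: L_def)
      ultimately show "((\<lambda>t. Q (x t)) has_vector_derivative L (Q (x t))) (at t within {0..Tt})" by simp
    qed
  qed
  then have Qw: "Q w = 0" using x0 by simp
  have wT: "w \<in> T" using wS span_base unfolding T_def by (auto simp: orthogonal_commute)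
  have "orthogonal w w" by (rule perp[OF _ wT]) (metis Qv Qw inner_zero_right)
  then show False using w0 by (simp add: orthogonal_def)
qed



lemma dt_cong: "(\<forall>j<k. u j = v j) \<Longrightarrow> dt_state P Q x u k = dt_state P Q x v k"
  by (induction k) auto

lemma dt_shift:
  "dt_state P Q x u (Suc k) = dt_state P Q (P *v x + Q *v u 0) (\<lambda>j. u (Suc j)) k"
  by (induction k) auto

lemma dt_add:
  fixes P :: "real^'n^'n" and Q :: "real^'m^'n"
  shows "dt_state P Q (x + y) (\<lambda>j. u j + v j) k = dt_state P Q x u k + dt_state P Q y v k"
  by (induction k) (auto simp: algebra_simps)

lemma dt_scale:
  fixes P :: "real^'n^'n" and Q :: "real^'m^'n"
  shows "dt_state P Q (c *\<^sub>R x) (\<lambda>j. c *\<^sub>R u j) k = c *\<^sub>R dt_state P Q x u k"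
  by (induction k) (auto simp: algebra_simps)

lemma dt_zero:
  fixes P :: "real^'n^'n" and Q :: "real^'m^'n"
  shows "dt_state P Q 0 (\<lambda>j. 0) k = 0"
  by (induction k) auto

lemma dt_ctrl:
  fixes P :: "real^'n^'n" and Q :: "real^'m^'n" and A B
  assumes ct: "ct_controllable A B" and k0: "\<kappa> \<noteq> 0"
    and P: "\<And>y. P *v y = y + \<kappa> *\<^sub>R (A *v y)"
    and Q: "\<And>v. Q *v v = \<kappa> *\<^sub>R (B *v v)"
  shows "dt_controllable P Q"
proof -
  define R where "R k = {dt_state P Q 0 u k | u. True}" for k
  have subR: "subspace (R k)" for k
    unfolding subspace_def R_def
  proof (intro conjI ballI allI)
    show "0 \<in> {dt_state P Q 0 u k |u. True}" using dt_zero[of P Q k] by (metis (mono_tags, lifting) mem_Collect_eq)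
    fix x y assume "x \<in> {dt_state P Q 0 u k |u. True}" "y \<in> {dt_state P Q 0 u k |u. True}"
    then obtain u v where "x = dt_state P Q 0 u k" "y = dt_state P Q 0 v k" by blast
    then have "x + y = dt_state P Q 0 (\<lambda>j. u j + v j) k" using dt_add[of P Q 0 0 u v k] by simp
    then show "x + y \<in> {dt_state P Q 0 u k |u. True}" by blast
  next
    fix c x assume "x \<in> {dt_state P Q 0 u k |u. True}"
    then obtain u where "x = dt_state P Q 0 u k" by blast
    then have "c *\<^sub>R x = dt_state P Q 0 (\<lambda>j. c *\<^sub>R u j) k" using dt_scale[of P Q c 0 u k] by simp
    then show "c *\<^sub>R x \<in> {dt_state P Q 0 u k |u. True}" by blast
  qed
  have monoS: "R k \<subseteq> R (Suc k)" for k
  proof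
    fix y assume "y \<in> R k"
    then obtain u where y: "y = dt_state P Q 0 u k" unfolding R_def by blast
    define u' where "u' j = (case j of 0 \<Rightarrow> 0 | Suc i \<Rightarrow> u i)" for j
    have "dt_state P Q 0 u' (Suc k) = y"
      unfolding dt_shift y by (simp add: u'_def)
    then show "y \<in> R (Suc k)" unfolding R_def by blast
  qed
  have mono: "R i \<subseteq> R j" if "i \<le> j" for i j
    using lift_Suc_mono_le[of R, OF monoS that] .
  define Ri where "Ri = (\<Union>k. R k)"
  have subRi: "subspace Ri"
    unfolding subspace_def
  proof (intro conjI ballI allI)
    show "0 \<in> Ri" unfolding Ri_def using subR subspace_0 by blast
    fix x y assume "x \<in> Ri" "y \<in> Ri"
    then obtain i j where "x \<in> R i" "y \<in> R j" unfolding Ri_def by blast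
    then have "x \<in> R (max i j)" "y \<in> R (max i j)" using mono[of i "max i j"] mono[of j "max i j"] by auto
    then have "x + y \<in> R (max i j)" using subR subspace_add by blast
    then show "x + y \<in> Ri" unfolding Ri_def by blast
  next
    fix c x assume "x \<in> Ri"
    then obtain i where "x \<in> R i" unfolding Ri_def by blast
    then have "c *\<^sub>R x \<in> R i" using subR subspace_scale by blast
    then show "c *\<^sub>R x \<in> Ri" unfolding Ri_def by blast
  qed
  have PR: "P *v y \<in> Ri" if yR: "y \<in> Ri" for y
  proof -
    obtain k where "y \<in> R k" using yR unfolding Ri_def by blast
    then obtain u where y: "y = dt_state P Q 0 u k" unfolding R_def by blast
    have "dt_state P Q 0 (u(k:=0)) k = y" unfolding y by (rule dt_cong) auto
    then have e: "dt_state P Q 0 (u(k:=0)) (Suc k) = P *v y" by simp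
    have "P *v y \<in> R (Suc k)" unfolding R_def by (rule CollectI, rule exI[of _ "u(k:=0)"]) (simp only: e)
    then show ?thesis unfolding Ri_def by blast
  qed
  have QR: "Q *v v \<in> Ri" for v
  proof -
    have e: "dt_state P Q 0 (\<lambda>_. v) (Suc 0) = Q *v v" by simp
    have "Q *v v \<in> R (Suc 0)" unfolding R_def by (rule CollectI, rule exI[of _ "\<lambda>_. v"]) (simp only: e)
    then show ?thesis unfolding Ri_def by blast
  qed
  have "Ri = UNIV"
  proof (rule ct_full[OF ct subRi])
    show "\<forall>x\<in>Ri. A *v x \<in> Ri"
    proof
      fix x assume x: "x \<in> Ri"
      have "A *v x = (1/\<kappa>) *\<^sub>R (P *v x - x)" using P[of x] k0 by simp
      then show "A *v x \<in> Ri" using subspace_scale[OF subRi subspace_diff[OF subRi PR[OF x] x]] by simp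
    qed
    show "\<forall>u. B *v u \<in> Ri"
    proof
      fix u
      have "B *v u = (1/\<kappa>) *\<^sub>R (Q *v u)" using Q[of u] k0 by simp
      then show "B *v u \<in> Ri" using subspace_scale[OF subRi QR[of u]] by simp
    qed
  qed
  then have "\<forall>b\<in>(Basis :: (real^'n) set). \<exists>k. b \<in> R k" unfolding Ri_def by blast
  then obtain f where f: "\<forall>b\<in>(Basis :: (real^'n) set). b \<in> R (f b)" by metis
  define K where "K = Max (f ` (Basis :: (real^'n) set))"
  have "(Basis :: (real^'n) set) \<subseteq> R K"
  proof
    fix b :: "real^'n" assume b: "b \<in> Basis"
    have fbK: "f b \<le> K" unfolding K_def using b by simp
    show "b \<in> R K" using mono[OF fbK] f b by blast
  qed
  then have "span (Basis :: (real^'n) set) \<subseteq> R K" by (rule span_minimal[OF _ subR])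
  then have RK: "R K = UNIV" by (simp add: span_Basis top.extremum_unique)
  show ?thesis unfolding dt_controllable_def
  proof
    fix x0
    have "- dt_state P Q x0 (\<lambda>_. 0) K \<in> R K" using RK by simp
    then obtain u where u: "- dt_state P Q x0 (\<lambda>_. 0) K = dt_state P Q 0 u K"
      unfolding R_def by blast
    have "dt_state P Q (x0 + 0) (\<lambda>j. 0 + u j) K = 0"
      unfolding dt_add u[symmetric] by simp
    then show "\<exists>k u. dt_state P Q x0 u k = 0" by auto
  qed
qed


lemma Phi_eq:
  fixes a c h :: real and W :: "real ^ 'n ^ 'n" and y :: "real^'n"
  assumes "a \<noteq> 0"
  shows "(exp (a * h) *\<^sub>R mat 1 + ((c / a) * (exp (a * h) - 1)) *\<^sub>R W) *v y
     = y + ((exp (a*h) - 1)/a) *\<^sub>R ((a *\<^sub>R mat 1 + c *\<^sub>R W) *v y)"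
proof -
  have "(exp (a * h) *\<^sub>R mat 1 + ((c / a) * (exp (a * h) - 1)) *\<^sub>R W) *v y
     = exp (a * h) *\<^sub>R y + ((c / a) * (exp (a * h) - 1)) *\<^sub>R (W *v y)"
    by (simp add: matrix_vector_mult_add_rdistrib scaleR_matrix_vector_assoc[symmetric])
  also have "\<dots> = y + ((exp (a*h) - 1)/a) *\<^sub>R (a *\<^sub>R y + c *\<^sub>R (W *v y))"
    using assms by (simp add: vec_eq_iff field_simps)
  also have "\<dots> = y + ((exp (a*h) - 1)/a) *\<^sub>R ((a *\<^sub>R mat 1 + c *\<^sub>R W) *v y)"
    by (simp add: matrix_vector_mult_add_rdistrib scaleR_matrix_vector_assoc[symmetric])
  finally show ?thesis .
qed
lemma Psi_eq:
  fixes a b h :: real and D :: "real ^ 'm ^ 'n" and v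
  assumes "a \<noteq> 0"
  shows "(((b / a) * (exp (a * h) - 1)) *\<^sub>R D) *v v = ((exp (a*h) - 1)/a) *\<^sub>R ((b *\<^sub>R D) *v v)"
  by (simp add: scaleR_matrix_vector_assoc[symmetric])
lemma kappa_nz: "a \<noteq> 0 \<Longrightarrow> h > 0 \<Longrightarrow> (exp (a*h) - 1)/(a::real) \<noteq> 0"
  by simp

theorem corollary9:
  fixes a b c h :: real and W :: "real ^ 'n ^ 'n" and \<delta> :: "real ^ 'n"
  assumes "a \<noteq> 0"
    and "\<forall>i. W $ i $ i = 0"
    and "\<forall>i. \<delta> $ i \<in> {0, 1}"
    and "h > 0"
    and "ct_controllable (a *\<^sub>R mat 1 + c *\<^sub>R W) (b *\<^sub>R diag_mat \<delta>)"
  shows "dt_controllable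
           (exp (a * h) *\<^sub>R mat 1 + ((c / a) * (exp (a * h) - 1)) *\<^sub>R W)
           (((b / a) * (exp (a * h) - 1)) *\<^sub>R diag_mat \<delta>)"
  by (rule dt_ctrl[OF assms(5) kappa_nz[OF assms(1) assms(4)] Phi_eq[OF assms(1)] Psi_eq[OF assms(1)]])

end
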